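(* The minimum $n$ for which there exist two distinct $n\times n\times n$ alternating sign hypermatrices $A$ and $B$ with $L(A)=L(B)$ is $4$. That is, no such pair exists for $n\le 3$, and such a pair exists for $n=4$.
   Context: An alternating sign hypermatrix (ASHM) is an $n\times n\times n$ hypermatrix $A=[a_{ijk}]$ with entries in $\{0,1,-1\}$ such that in every row line $[a_{ijk}: i=1,\dots,n]$ (fixed $j,k$), column line $[a_{ijk}: j=1,\dots,n]$ (fixed $i,k$) and vertical line $[a_{ijk}: k=1,\dots,n]$ (fixed $i,j$) the non-zero entries alternate in sign, starting and ending with $+1$. The $k$-th plane of $A$ is $P_k(A)=[a_{ijk}]_{i,j=1}^n$, and $L(A)=\sum_{k=1}^n k\,P_k(A)$ is an $n\times n$ matrix. *)

theory Defs
  imports Main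
begin

text \<open>An n x n x n hypermatrix is modelled as a function nat => nat => nat => int,
  with indices ranging over {1..n}; entries outside this range are required to be 0
  so that equality of hypermatrices is equality of functions.\<close>

type_synonym hypermatrix = "nat \<Rightarrow> nat \<Rightarrow> nat \<Rightarrow> int"

definition alt_sign_line :: "nat \<Rightarrow> (nat \<Rightarrow> int) \<Rightarrow> bool" where
  "alt_sign_line n f \<longleftrightarrow>
     (\<forall>i\<in>{1..n}. f i \<in> {-1, 0, 1}) \<and>
     (let xs = filter (\<lambda>x. x \<noteq> 0) (map f [1..<n+1]) in
        xs \<noteq> [] \<and> hd xs = 1 \<and> last xs = 1 \<and>
        (\<forall>i. Suc i < length xs \<longrightarrow> xs ! Suc i = - (xs ! i)))"

definition ASHM :: "nat \<Rightarrow> hypermatrix \<Rightarrow> bool" where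
  "ASHM n A \<longleftrightarrow>
     (\<forall>i j k. \<not> (i \<in> {1..n} \<and> j \<in> {1..n} \<and> k \<in> {1..n}) \<longrightarrow> A i j k = 0) \<and>
     (\<forall>j\<in>{1..n}. \<forall>k\<in>{1..n}. alt_sign_line n (\<lambda>i. A i j k)) \<and>
     (\<forall>i\<in>{1..n}. \<forall>k\<in>{1..n}. alt_sign_line n (\<lambda>j. A i j k)) \<and>
     (\<forall>i\<in>{1..n}. \<forall>j\<in>{1..n}. alt_sign_line n (\<lambda>k. A i j k))"

definition plane :: "hypermatrix \<Rightarrow> nat \<Rightarrow> nat \<Rightarrow> nat \<Rightarrow> int" where
  "plane A k = (\<lambda>i j. A i j k)"

definition Lmat :: "nat \<Rightarrow> hypermatrix \<Rightarrow> nat \<Rightarrow> nat \<Rightarrow> int" where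
  "Lmat n A = (\<lambda>i j. \<Sum>k = 1..n. int k * plane A k i j)"

end

theory Submission imports Defs begin

lemma set3: "{1..3::nat} = {1,2,3}" and set2: "{1..2::nat} = {1,2}" and set4: "{1..4::nat} = {1,2,3,4}" by auto
lemma up2: "[1..<2+1] = [1,2::nat]" and up3: "[1..<3+1] = [1,2,3::nat]" and up4: "[1..<4+1] = [1,2,3,4::nat]"
  by (simp_all add: numeral_eq_Suc upt_rec)

lemma asl1: "alt_sign_line 1 f \<longleftrightarrow> f 1 = 1"
  unfolding alt_sign_line_def by auto

lemma asl2: "alt_sign_line 2 f \<longleftrightarrow> (f 1 = 1 \<and> f 2 = 0) \<or> (f 1 = 0 \<and> f 2 = 1)"
proof -
  have "alt_sign_line 2 f \<longleftrightarrow> f 1 \<in> {-1,0,1} \<and> f 2 \<in> {-1,0,1} \<and> 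
    (let xs = filter (\<lambda>x. x \<noteq> 0) [f 1, f 2] in
        xs \<noteq> [] \<and> hd xs = 1 \<and> last xs = 1 \<and>
        (\<forall>i. Suc i < length xs \<longrightarrow> xs ! Suc i = - (xs ! i)))"
    unfolding alt_sign_line_def up2 set2 by simp
  also have "\<dots> \<longleftrightarrow> (f 1 = 1 \<and> f 2 = 0) \<or> (f 1 = 0 \<and> f 2 = 1)"
    by (cases "f 1 = -1"; cases "f 1 = 0"; cases "f 1 = 1"; cases "f 2 = -1"; cases "f 2 = 0"; cases "f 2 = 1";
        simp add: less_Suc_eq nth_Cons ex_disj_distrib split: nat.splits)
  finally show ?thesis .
qed

lemma asl3: "alt_sign_line 3 f \<longleftrightarrow> (f 1 = 1 \<and> f 2 = 0 \<and> f 3 = 0) \<or> (f 1 = 0 \<and> f 2 = 1 \<and> f 3 = 0)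
   \<or> (f 1 = 0 \<and> f 2 = 0 \<and> f 3 = 1) \<or> (f 1 = 1 \<and> f 2 = -1 \<and> f 3 = 1)"
proof -
  have "alt_sign_line 3 f \<longleftrightarrow> f 1 \<in> {-1,0,1} \<and> f 2 \<in> {-1,0,1} \<and> f 3 \<in> {-1,0,1} \<and>
    (let xs = filter (\<lambda>x. x \<noteq> 0) [f 1, f 2, f 3] in
        xs \<noteq> [] \<and> hd xs = 1 \<and> last xs = 1 \<and>
        (\<forall>i. Suc i < length xs \<longrightarrow> xs ! Suc i = - (xs ! i)))"
    unfolding alt_sign_line_def up3 set3 by simp
  also have "\<dots> \<longleftrightarrow> (f 1 = 1 \<and> f 2 = 0 \<and> f 3 = 0) \<or> (f 1 = 0 \<and> f 2 = 1 \<and> f 3 = 0)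
   \<or> (f 1 = 0 \<and> f 2 = 0 \<and> f 3 = 1) \<or> (f 1 = 1 \<and> f 2 = -1 \<and> f 3 = 1)"
    by (cases "f 1 = -1"; cases "f 1 = 0"; cases "f 1 = 1"; cases "f 2 = -1"; cases "f 2 = 0"; cases "f 2 = 1";
        cases "f 3 = -1"; cases "f 3 = 0"; cases "f 3 = 1";
        simp add: less_Suc_eq nth_Cons ex_disj_distrib split: nat.splits)
  finally show ?thesis .
qed


lemma L3: "Lmat 3 A i j = A i j 1 + 2 * A i j 2 + 3 * A i j 3"
  unfolding Lmat_def plane_def set3 by simp
lemma L2: "Lmat 2 A i j = A i j 1 + 2 * A i j 2"
  unfolding Lmat_def plane_def set2 by simp
lemma L1: "Lmat 1 A i j = A i j 1"
  unfolding Lmat_def plane_def by simp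

lemma vert3: "ASHM 3 A \<Longrightarrow> i \<in> {1..3} \<Longrightarrow> j \<in> {1..3} \<Longrightarrow>
   (A i j 1 = 1 \<and> A i j 2 = 0 \<and> A i j 3 = 0) \<or> (A i j 1 = 0 \<and> A i j 2 = 1 \<and> A i j 3 = 0)
   \<or> (A i j 1 = 0 \<and> A i j 2 = 0 \<and> A i j 3 = 1) \<or> (A i j 1 = 1 \<and> A i j 2 = -1 \<and> A i j 3 = 1)"
  unfolding ASHM_def using asl3[of "\<lambda>k. A i j k"] by auto

lemma row3: "ASHM 3 A \<Longrightarrow> j \<in> {1..3} \<Longrightarrow> k \<in> {1..3} \<Longrightarrow>
   (A 1 j k = 1 \<and> A 2 j k = 0 \<and> A 3 j k = 0) \<or> (A 1 j k = 0 \<and> A 2 j k = 1 \<and> A 3 j k = 0)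
   \<or> (A 1 j k = 0 \<and> A 2 j k = 0 \<and> A 3 j k = 1) \<or> (A 1 j k = 1 \<and> A 2 j k = -1 \<and> A 3 j k = 1)"
  unfolding ASHM_def using asl3[of "\<lambda>i. A i j k"] by auto

lemma col3: "ASHM 3 A \<Longrightarrow> i \<in> {1..3} \<Longrightarrow> k \<in> {1..3} \<Longrightarrow>
   (A i 1 k = 1 \<and> A i 2 k = 0 \<and> A i 3 k = 0) \<or> (A i 1 k = 0 \<and> A i 2 k = 1 \<and> A i 3 k = 0)
   \<or> (A i 1 k = 0 \<and> A i 2 k = 0 \<and> A i 3 k = 1) \<or> (A i 1 k = 1 \<and> A i 2 k = -1 \<and> A i 3 k = 1)"
  unfolding ASHM_def using asl3[of "\<lambda>j. A i j k"] by auto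

lemma neg3: assumes "ASHM 3 A" "i \<in> {1..3}" "j \<in> {1..3}" "A i j 2 = -1" shows "i = 2 \<and> j = 2"
proof
  have i: "i = 1 \<or> i = 2 \<or> i = 3" and j: "j = 1 \<or> j = 2 \<or> j = 3" using assms by auto
  show "i = 2" using row3[OF assms(1) assms(3), of 2] i assms(4) by auto
  show "j = 2" using col3[OF assms(1) assms(2), of 2] j assms(4) by auto
qed

lemma out0: "ASHM n A \<Longrightarrow> \<not> (i \<in> {1..n} \<and> j \<in> {1..n} \<and> k \<in> {1..n}) \<Longrightarrow> A i j k = 0"
  unfolding ASHM_def by blast

lemma center3:
  assumes A: "ASHM 3 A" and B: "ASHM 3 B" and L: "\<forall>i\<in>{1..3}. \<forall>j\<in>{1..3}. Lmat 3 A i j = Lmat 3 B i j"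
    and a: "A 2 2 2 = -1" shows "B 2 2 2 = -1"
proof (rule ccontr)
  assume nb: "B 2 2 2 \<noteq> -1"
  have a12: "A 1 2 2 = 1" using row3[OF A, of 2 2] a by auto
  have "Lmat 3 A 1 2 = 2" using vert3[OF A, of 1 2] a12 L3[of A 1 2] by auto
  then have lb12: "Lmat 3 B 1 2 = 2" using L by auto
  have "B 1 2 2 \<noteq> -1" using neg3[OF B, of 1 2] by auto
  then have b12: "B 1 2 2 = 1" using vert3[OF B, of 1 2] lb12 L3[of B 1 2] by auto
  have "Lmat 3 A 2 2 = 2" using a vert3[OF A, of 2 2] L3[of A 2 2] by auto
  then have lb22: "Lmat 3 B 2 2 = 2" using L by auto
  then have b22: "B 2 2 2 = 1" using vert3[OF B, of 2 2] nb L3[of B 2 2] by auto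
  show False using row3[OF B, of 2 2] b12 b22 by auto
qed

lemma inj3:
  assumes A: "ASHM 3 A" and B: "ASHM 3 B" and L: "\<forall>i\<in>{1..3}. \<forall>j\<in>{1..3}. Lmat 3 A i j = Lmat 3 B i j"
  shows "A = B"
proof (intro ext)
  fix i j k
  show "A i j k = B i j k"
  proof (cases "i \<in> {1..3} \<and> j \<in> {1..3} \<and> k \<in> {1..3}")
    case False then show ?thesis using out0[OF A] out0[OF B] by metis
  next
    case True
    then have i: "i \<in> {1..3}" and j: "j \<in> {1..3}" and k: "k = 1 \<or> k = 2 \<or> k = 3" by auto
    have ab: "A i j 2 = -1 \<Longrightarrow> B i j 2 = -1"
      using neg3[OF A i j] center3[OF A B L] by auto
    have ba: "B i j 2 = -1 \<Longrightarrow> A i j 2 = -1"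
      using neg3[OF B i j] center3[OF B A] L by auto
    have "Lmat 3 A i j = Lmat 3 B i j" using L i j by auto
    then have "A i j 1 = B i j 1 \<and> A i j 2 = B i j 2 \<and> A i j 3 = B i j 3"
      using vert3[OF A i j] vert3[OF B i j] ab ba L3[of A i j] L3[of B i j] by auto
    then show ?thesis using k by auto
  qed
qed

lemma inj2:
  assumes A: "ASHM 2 A" and B: "ASHM 2 B" and L: "\<forall>i\<in>{1..2}. \<forall>j\<in>{1..2}. Lmat 2 A i j = Lmat 2 B i j"
  shows "A = B"
proof (intro ext)
  fix i j k
  show "A i j k = B i j k"
  proof (cases "i \<in> {1..2} \<and> j \<in> {1..2} \<and> k \<in> {1..2}")
    case False then show ?thesis using out0[OF A] out0[OF B] by metis
  next
    case True
    then have i: "i \<in> {1..2}" and j: "j \<in> {1..2}" and k: "k = 1 \<or> k = 2" by auto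
    have "Lmat 2 A i j = Lmat 2 B i j" using L i j by auto
    moreover have "alt_sign_line 2 (\<lambda>k. A i j k)" "alt_sign_line 2 (\<lambda>k. B i j k)"
      using A B i j unfolding ASHM_def by auto
    ultimately have "A i j 1 = B i j 1 \<and> A i j 2 = B i j 2"
      unfolding asl2 L2 by auto
    then show ?thesis using k by auto
  qed
qed

lemma inj1:
  assumes A: "ASHM 1 A" and B: "ASHM 1 B"
  shows "A = B"
proof (intro ext)
  fix i j k
  show "A i j k = B i j k"
  proof (cases "i \<in> {1..1} \<and> j \<in> {1..1} \<and> k \<in> {1..1}")
    case False then show ?thesis using out0[OF A] out0[OF B] by metis
  next
    case True
    moreover have "alt_sign_line 1 (\<lambda>k. A i j k)" "alt_sign_line 1 (\<lambda>k. B i j k)"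
      using A B True unfolding ASHM_def by auto
    ultimately show ?thesis unfolding asl1 by auto
  qed
qed

lemma inj0:
  assumes A: "ASHM 0 A" and B: "ASHM 0 B"
  shows "A = B"
  using out0[OF A] out0[OF B] by (intro ext) auto


definition mk :: "int list list list \<Rightarrow> hypermatrix" where
  "mk P = (\<lambda>i j k. if i \<in> {1..4} \<and> j \<in> {1..4} \<and> k \<in> {1..4} then P ! (k-1) ! (i-1) ! (j-1) else 0)"

definition PA :: "int list list list" where
  "PA = [[[0, 0, 0, 1], [0, 0, 1, 0], [0, 1, 0, 0], [1, 0, 0, 0]], [[0, 0, 1, 0], [0, 1, -1, 1], [1, -1, 1, 0], [0, 1, 0, 0]], [[0, 1, 0, 0], [1, 0, 0, 0], [0, 0, 0, 1], [0, 0, 1, 0]], [[1, 0, 0, 0], [0, 0, 1, 0], [0, 1, 0, 0], [0, 0, 0, 1]]]"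
definition PB :: "int list list list" where
  "PB = [[[0, 0, 0, 1], [0, 1, 0, 0], [0, 0, 1, 0], [1, 0, 0, 0]], [[0, 0, 1, 0], [0, 0, 0, 1], [1, 0, 0, 0], [0, 1, 0, 0]], [[0, 1, 0, 0], [1, -1, 1, 0], [0, 1, -1, 1], [0, 0, 1, 0]], [[1, 0, 0, 0], [0, 1, 0, 0], [0, 0, 1, 0], [0, 0, 0, 1]]]"

lemma asl4: "alt_sign_line 4 f \<longleftrightarrow> f 1 \<in> {-1,0,1} \<and> f 2 \<in> {-1,0,1} \<and> f 3 \<in> {-1,0,1} \<and> f 4 \<in> {-1,0,1} \<and>
    (let xs = filter (\<lambda>x. x \<noteq> 0) [f 1, f 2, f 3, f 4] in
        xs \<noteq> [] \<and> hd xs = 1 \<and> last xs = 1 \<and>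
        (\<forall>i. Suc i < length xs \<longrightarrow> xs ! Suc i = - (xs ! i)))"
    unfolding alt_sign_line_def up4 set4 by simp

lemma exA: "ASHM 4 (mk PA)"
  unfolding ASHM_def asl4 set4 mk_def PA_def
  by (simp add: less_Suc_eq nth_Cons ex_disj_distrib split: nat.splits)

lemma exB: "ASHM 4 (mk PB)"
  unfolding ASHM_def asl4 set4 mk_def PB_def
  by (simp add: less_Suc_eq nth_Cons ex_disj_distrib split: nat.splits)

lemma exL: "\<forall>i\<in>{1..4}. \<forall>j\<in>{1..4}. Lmat 4 (mk PA) i j = Lmat 4 (mk PB) i j"
  unfolding Lmat_def plane_def set4 mk_def PA_def PB_def by simp

lemma exNE: "mk PA \<noteq> mk PB"
proof
  assume "mk PA = mk PB"
  then have "mk PA 2 2 2 = mk PB 2 2 2" by simp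
  then show False unfolding mk_def PA_def PB_def by simp
qed

theorem theorem2p9:
  shows "(\<forall>n \<le> 3. \<not> (\<exists>A B. ASHM n A \<and> ASHM n B \<and> A \<noteq> B \<and>
              (\<forall>i\<in>{1..n}. \<forall>j\<in>{1..n}. Lmat n A i j = Lmat n B i j)))
         \<and> (\<exists>A B. ASHM 4 A \<and> ASHM 4 B \<and> A \<noteq> B \<and>
              (\<forall>i\<in>{1..4}. \<forall>j\<in>{1..4}. Lmat 4 A i j = Lmat 4 B i j))"
proof
  show "\<forall>n \<le> 3. \<not> (\<exists>A B. ASHM n A \<and> ASHM n B \<and> A \<noteq> B \<and>
              (\<forall>i\<in>{1..n}. \<forall>j\<in>{1..n}. Lmat n A i j = Lmat n B i j))"
  proof (intro allI impI notI)
    fix n :: nat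
    assume n: "n \<le> 3" and "\<exists>A B. ASHM n A \<and> ASHM n B \<and> A \<noteq> B \<and>
              (\<forall>i\<in>{1..n}. \<forall>j\<in>{1..n}. Lmat n A i j = Lmat n B i j)"
    then obtain A B where h: "ASHM n A" "ASHM n B" "A \<noteq> B"
      "\<forall>i\<in>{1..n}. \<forall>j\<in>{1..n}. Lmat n A i j = Lmat n B i j" by blast
    have "n = 0 \<or> n = 1 \<or> n = 2 \<or> n = 3" using n by auto
    then show False using h inj0 inj1 inj2 inj3 by auto
  qed
  show "\<exists>A B. ASHM 4 A \<and> ASHM 4 B \<and> A \<noteq> B \<and>
              (\<forall>i\<in>{1..4}. \<forall>j\<in>{1..4}. Lmat 4 A i j = Lmat 4 B i j)"
    using exA exB exNE exL by blast
qed

end
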